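(* Let $\mathcal{L}=(S,\Sigma,\to)$ be a pLTS in which every relevant distribution has finite support, and let $\mathcal{L}'$ be its associated standard LTS, with bisimilarity approximants $\sim'_m$. Then for every $n\in\mathbb{N}$: (i) for relevant distributions $d_1,d_2$: $d_1,d_2$ are $\sim_n$-equivalent (where $\sim_n$ is the approximant in $\mathcal{L}$) if and only if $d_1\sim'_{3n+2}d_2$ in $\mathcal{L}'$; (ii) for relevant sets $T_1,T_2$: $T_1,T_2$ are $\sim_n$-similar if and only if $T_1\sim'_{3n+1}T_2$ in $\mathcal{L}'$.
   Context: For a countable set $A$, a probability distribution on $A$ is a function $d\colon A\to[0,1]\cap\mathbb{Q}$ with $\sum_{a\in A}d(a)=1$; $\mathrm{supp}(d)=\{a\mid d(a)>0\}$; $\mathcal{D}(A)$ is the set of distributions; $d(B)=\sum_{a\in B}d(a)$; $d$ is Dirac if $d(a)=1$ for some $a$. A pLTS is $\mathcal{L}=(S,\Sigma,\to)$ with $S$ finite or countable, $\Sigma$ finite, $\to\subseteq S\times\Sigma\times\mathcal{D}(S)$ image-finite; write $s\xrightarrow{a}d$. A standard LTS is a pLTS whose distributions are all Dirac. For an equivalence $R$ on $S$, $d,d'$ are $R$-equivalent if $d(E)=d'(E)$ for every $R$-class $E$; subsets $T_1,T_2\subseteq S$ are $R$-similar if they intersect exactly the same $R$-classes. Approximants: $s\sim_0t$ always; $s\sim_{n+1}t$ iff every $s\xrightarrow{a}d$ is matched by some $t\xrightarrow{a}d'$ with $d,d'$ $\sim_n$-equivalent and vice versa. Associated LTS: $d$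 is relevant if $s\xrightarrow{a}d$ for some $s,a$; a nonempty $T\subseteq S$ is relevant if $T\subseteq\mathrm{supp}(d)$ for some relevant $d$; $\rho$ is relevant if $\rho=d(T)$ for relevant $d$ and nonempty $T\subseteq\mathrm{supp}(d)$. $\mathcal{L}'=(S',\Sigma',\Rightarrow)$ has states: $S$ plus relevant distributions plus relevant sets (disjoint union); actions: $\Sigma$ plus relevant numbers plus $\{\#\}$ (disjoint union); transitions: $s\overset{a}{\Rightarrow}d$ iff $s\xrightarrow{a}d$; $d\overset{\rho}{\Rightarrow}T$ iff $d,\rho$ relevant, $T\subseteq\mathrm{supp}(d)$, $d(T)\ge\rho$; $T\overset{\#}{\Rightarrow}s$ iff $T$ relevant and $s\in T$. *)

theory Defs
  imports "HOL-Analysis.Infinite_Sum"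
begin

type_synonym 's dist = "'s \<Rightarrow> rat"

definition supp :: "'s dist \<Rightarrow> 's set" where
  "supp d = {x. d x > 0}"

definition mass :: "'s dist \<Rightarrow> 's set \<Rightarrow> real" where
  "mass d B = infsum (\<lambda>x. real_of_rat (d x)) B"

definition is_dist :: "'s set \<Rightarrow> 's dist \<Rightarrow> bool" where
  "is_dist A d \<longleftrightarrow> (\<forall>x. 0 \<le> d x \<and> d x \<le> 1) \<and> (\<forall>x. x \<notin> A \<longrightarrow> d x = 0)
     \<and> ((\<lambda>x. real_of_rat (d x)) has_sum 1) A"

type_synonym ('s,'a) ptrans = "('s \<times> 'a \<times> 's dist) set"

definition is_pLTS :: "'s set \<Rightarrow> 'a set \<Rightarrow> ('s,'a) ptrans \<Rightarrow> bool" where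
  "is_pLTS S Sig tr \<longleftrightarrow> countable S \<and> finite Sig \<and>
     (\<forall>s a d. (s,a,d) \<in> tr \<longrightarrow> s \<in> S \<and> a \<in> Sig \<and> is_dist S d) \<and>
     (\<forall>s a. finite {d. (s,a,d) \<in> tr})"

definition dist_equiv :: "'s set \<Rightarrow> ('s \<times> 's) set \<Rightarrow> 's dist \<Rightarrow> 's dist \<Rightarrow> bool" where
  "dist_equiv S R d d' \<longleftrightarrow> (\<forall>E \<in> S // R. mass d E = mass d' E)"

definition set_similar :: "'s set \<Rightarrow> ('s \<times> 's) set \<Rightarrow> 's set \<Rightarrow> 's set \<Rightarrow> bool" where
  "set_similar S R T1 T2 \<longleftrightarrow> (\<forall>E \<in> S // R. (E \<inter> T1 \<noteq> {}) = (E \<inter> T2 \<noteq> {}))"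

fun papprox :: "'s set \<Rightarrow> ('s,'a) ptrans \<Rightarrow> nat \<Rightarrow> ('s \<times> 's) set" where
  "papprox S tr 0 = S \<times> S"
| "papprox S tr (Suc n) = {(s,t) \<in> S \<times> S.
     (\<forall>a d. (s,a,d) \<in> tr \<longrightarrow> (\<exists>d'. (t,a,d') \<in> tr \<and> dist_equiv S (papprox S tr n) d d')) \<and>
     (\<forall>a d'. (t,a,d') \<in> tr \<longrightarrow> (\<exists>d. (s,a,d) \<in> tr \<and> dist_equiv S (papprox S tr n) d d'))}"

fun lapprox :: "'q set \<Rightarrow> ('q \<times> 'b \<times> 'q) set \<Rightarrow> nat \<Rightarrow> ('q \<times> 'q) set" where
  "lapprox Q tr 0 = Q \<times> Q"
| "lapprox Q tr (Suc n) = {(s,t) \<in> Q \<times> Q.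
     (\<forall>a s'. (s,a,s') \<in> tr \<longrightarrow> (\<exists>t'. (t,a,t') \<in> tr \<and> (s',t') \<in> lapprox Q tr n)) \<and>
     (\<forall>a t'. (t,a,t') \<in> tr \<longrightarrow> (\<exists>s'. (s,a,s') \<in> tr \<and> (s',t') \<in> lapprox Q tr n))}"

definition relevant_dist :: "('s,'a) ptrans \<Rightarrow> 's dist \<Rightarrow> bool" where
  "relevant_dist tr d \<longleftrightarrow> (\<exists>s a. (s,a,d) \<in> tr)"

definition relevant_set :: "('s,'a) ptrans \<Rightarrow> 's set \<Rightarrow> bool" where
  "relevant_set tr T \<longleftrightarrow> T \<noteq> {} \<and> (\<exists>d. relevant_dist tr d \<and> T \<subseteq> supp d)"

definition relevant_num :: "('s,'a) ptrans \<Rightarrow> real \<Rightarrow> bool" where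
  "relevant_num tr \<rho> \<longleftrightarrow> (\<exists>d T. relevant_dist tr d \<and> T \<noteq> {} \<and> T \<subseteq> supp d \<and> \<rho> = mass d T)"

datatype 's lstate = St 's | Dst "'s dist" | StSet "'s set"
datatype 'a lact = Act 'a | Num real | Hash

definition assoc_states :: "'s set \<Rightarrow> ('s,'a) ptrans \<Rightarrow> 's lstate set" where
  "assoc_states S tr = St ` S \<union> Dst ` {d. relevant_dist tr d} \<union> StSet ` {T. relevant_set tr T}"

definition assoc_acts :: "'a set \<Rightarrow> ('s,'a) ptrans \<Rightarrow> 'a lact set" where
  "assoc_acts Sig tr = Act ` Sig \<union> Num ` {\<rho>. relevant_num tr \<rho>} \<union> {Hash}"

definition assoc_trans :: "('s,'a) ptrans \<Rightarrow> ('s lstate \<times> 'a lact \<times> 's lstate) set" where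
  "assoc_trans tr =
     {(St s, Act a, Dst d) | s a d. (s,a,d) \<in> tr}
   \<union> {(Dst d, Num \<rho>, StSet T) | d \<rho> T. relevant_dist tr d \<and> relevant_num tr \<rho>
         \<and> T \<subseteq> supp d \<and> mass d T \<ge> \<rho>}
   \<union> {(StSet T, Hash, St s) | T s. relevant_set tr T \<and> s \<in> T}"

end

theory Submission
  imports Defs
begin

lemma mass_fin:
  assumes "finite (supp d)" "\<forall>x. 0 \<le> d x"
  shows "mass d A = (\<Sum>x\<in>A \<inter> supp d. real_of_rat (d x))"
proof -
  have "mass d A = infsum (\<lambda>x. real_of_rat (d x)) (A \<inter> supp d)"
    unfolding mass_def
  proof (rule infsum_cong_neutral)
    fix x assume "x \<in> A - A \<inter> supp d"
    then have "\<not> d x > 0" by (auto simp: supp_def)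
    with assms(2) have "d x = 0" by (metis antisym not_less)
    then show "real_of_rat (d x) = 0" by simp
  qed auto
  also have "\<dots> = (\<Sum>x\<in>A \<inter> supp d. real_of_rat (d x))"
    using assms(1) by simp
  finally show ?thesis .
qed

lemma mass_mono:
  assumes "finite (supp d)" "\<forall>x. 0 \<le> d x" "A \<subseteq> B"
  shows "mass d A \<le> mass d B"
  unfolding mass_fin[OF assms(1,2)]
  by (rule sum_mono2) (use assms in auto)

lemma mass_nonneg:
  assumes "finite (supp d)" "\<forall>x. 0 \<le> d x"
  shows "0 \<le> mass d A"
  unfolding mass_fin[OF assms(1,2)]
  by (rule sum_nonneg) (use assms in auto)

lemma mass_pos:
  assumes "finite (supp d)" "\<forall>x. 0 \<le> d x" "x \<in> A" "x \<in> supp d"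
  shows "0 < mass d A"
proof -
  have "real_of_rat (d x) \<le> mass d A"
    unfolding mass_fin[OF assms(1,2)]
    using member_le_sum[of x "A \<inter> supp d" "\<lambda>x. real_of_rat (d x)"] assms by auto
  moreover have "0 < d x" using assms(4) by (simp add: supp_def)
  ultimately show ?thesis by (meson less_le_trans zero_less_of_rat_iff)
qed

lemma rel_dist_props:
  assumes "is_pLTS S Sig tr" "relevant_dist tr d"
  shows "supp d \<subseteq> S" "\<forall>x. 0 \<le> d x"
  using assms unfolding is_pLTS_def relevant_dist_def is_dist_def supp_def
  by (auto, fastforce)

lemma trans_St: "(St s, a, q) \<in> assoc_trans tr \<longleftrightarrow> (\<exists>b d. a = Act b \<and> q = Dst d \<and> (s,b,d) \<in> tr)"
  by (auto simp: assoc_trans_def)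

lemma trans_Dst: "(Dst d, a, q) \<in> assoc_trans tr \<longleftrightarrow> (\<exists>\<rho> T. a = Num \<rho> \<and> q = StSet T \<and>
   relevant_dist tr d \<and> relevant_num tr \<rho> \<and> T \<subseteq> supp d \<and> mass d T \<ge> \<rho>)"
  by (auto simp: assoc_trans_def)

lemma trans_StSet: "(StSet T, a, q) \<in> assoc_trans tr \<longleftrightarrow> (\<exists>s. a = Hash \<and> q = St s \<and> relevant_set tr T \<and> s \<in> T)"
  by (auto simp: assoc_trans_def)

lemma lapprox_sub: "lapprox Q TR k \<subseteq> Q \<times> Q"
  by (cases k) auto

lemma Q_St: "St s \<in> assoc_states S tr \<longleftrightarrow> s \<in> S"
  by (auto simp: assoc_states_def)
lemma Q_Dst: "Dst d \<in> assoc_states S tr \<longleftrightarrow> relevant_dist tr d"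
  by (auto simp: assoc_states_def)
lemma Q_StSet: "StSet T \<in> assoc_states S tr \<longleftrightarrow> relevant_set tr T"
  by (auto simp: assoc_states_def)

lemma dist_equiv_sym: "dist_equiv S R d d' \<Longrightarrow> dist_equiv S R d' d"
  by (auto simp: dist_equiv_def)
lemma dist_equiv_trans: "dist_equiv S R d d' \<Longrightarrow> dist_equiv S R d' d'' \<Longrightarrow> dist_equiv S R d d''"
  by (auto simp: dist_equiv_def)
lemma dist_equiv_refl: "dist_equiv S R d d"
  by (auto simp: dist_equiv_def)

lemma papprox_equiv: "equiv S (papprox S tr n)"
proof (cases n)
  case 0 then show ?thesis by (auto simp: equiv_def refl_on_def sym_def trans_def)
next
  case (Suc m)
  have r: "refl_on S (papprox S tr (Suc m))"
    by (auto simp: refl_on_def intro: dist_equiv_refl)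
  have s: "sym (papprox S tr (Suc m))"
    unfolding sym_def by (auto intro: dist_equiv_sym) (meson dist_equiv_sym)+
  have t: "trans (papprox S tr (Suc m))"
    unfolding trans_def by (auto, meson dist_equiv_trans, meson dist_equiv_trans)
  show ?thesis using r s t Suc by (auto simp: equiv_def)
qed

lemma similar_iff:
  assumes "equiv S R" "T1 \<subseteq> S" "T2 \<subseteq> S"
  shows "set_similar S R T1 T2 \<longleftrightarrow> (\<forall>s\<in>T1. \<exists>t\<in>T2. (s,t)\<in>R) \<and> (\<forall>t\<in>T2. \<exists>s\<in>T1. (s,t)\<in>R)"
proof
  assume H: "set_similar S R T1 T2"
  show "(\<forall>s\<in>T1. \<exists>t\<in>T2. (s,t)\<in>R) \<and> (\<forall>t\<in>T2. \<exists>s\<in>T1. (s,t)\<in>R)"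
  proof safe
    fix s assume s: "s \<in> T1"
    then have "s \<in> S" using assms by auto
    then have E: "R``{s} \<in> S//R" "s \<in> R``{s}" using assms(1)
      by (auto simp: quotient_def equiv_def refl_on_def)
    then obtain t where "t \<in> R``{s} \<inter> T2" using H s unfolding set_similar_def by blast
    then show "\<exists>t\<in>T2. (s,t)\<in>R" by auto
  next
    fix t assume t: "t \<in> T2"
    then have "t \<in> S" using assms by auto
    then have E: "R``{t} \<in> S//R" "t \<in> R``{t}" using assms(1)
      by (auto simp: quotient_def equiv_def refl_on_def)
    then obtain s where "s \<in> R``{t} \<inter> T1" using H t unfolding set_similar_def by blast
    then show "\<exists>s\<in>T1. (s,t)\<in>R" using assms(1) by (auto simp: equiv_def sym_def)
  qed
next
  assume H: "(\<forall>s\<in>T1. \<exists>t\<in>T2. (s,t)\<in>R) \<and> (\<forall>t\<in>T2. \<exists>s\<in>T1. (s,t)\<in>R)"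
  show "set_similar S R T1 T2" unfolding set_similar_def
  proof
    fix E assume "E \<in> S//R"
    then obtain x where x: "x \<in> S" "E = R``{x}" by (auto simp: quotient_def)
    have tr: "trans R" using assms(1) by (simp add: equiv_def)
    show "(E \<inter> T1 \<noteq> {}) = (E \<inter> T2 \<noteq> {})"
    proof
      assume "E \<inter> T1 \<noteq> {}"
      then obtain s where "s \<in> T1" "(x,s) \<in> R" using x by auto
      then obtain t where "t \<in> T2" "(s,t) \<in> R" using H by blast
      then show "E \<inter> T2 \<noteq> {}" using x tr \<open>(x,s) \<in> R\<close> by (auto dest: transD)
    next
      assume "E \<inter> T2 \<noteq> {}"
      then obtain t where "t \<in> T2" "(x,t) \<in> R" using x by auto
      then obtain s where "s \<in> T1" "(s,t) \<in> R" using H by blast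
      then have "(t,s) \<in> R" using assms(1) by (auto simp: equiv_def sym_def)
      then show "E \<inter> T1 \<noteq> {}" using x tr \<open>(x,t) \<in> R\<close> \<open>s \<in> T1\<close> by (auto dest: transD)
    qed
  qed
qed


lemma rel_set_sub:
  assumes "is_pLTS S Sig tr" "relevant_set tr T"
  shows "T \<subseteq> S"
  using assms rel_dist_props(1) unfolding relevant_set_def by blast

lemma set_similar_sym: "set_similar S R T1 T2 \<Longrightarrow> set_similar S R T2 T1"
  by (auto simp: set_similar_def)

lemma set_lemma:
  assumes P: "is_pLTS S Sig tr"
  and H: "\<forall>s t. (s,t) \<in> papprox S tr n \<longleftrightarrow> (St s, St t) \<in> lapprox (assoc_states S tr) (assoc_trans tr) (3*n)"
  and T1: "relevant_set tr T1" and T2: "relevant_set tr T2"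
  shows "set_similar S (papprox S tr n) T1 T2 \<longleftrightarrow> (StSet T1, StSet T2) \<in> lapprox (assoc_states S tr) (assoc_trans tr) (Suc (3*n))"
proof -
  have "(StSet T1, StSet T2) \<in> lapprox (assoc_states S tr) (assoc_trans tr) (Suc (3*n)) \<longleftrightarrow>
     (\<forall>s\<in>T1. \<exists>t\<in>T2. (s,t)\<in>papprox S tr n) \<and> (\<forall>t\<in>T2. \<exists>s\<in>T1. (s,t)\<in>papprox S tr n)"
    using T1 T2 by (auto simp: Q_StSet trans_StSet H) blast+
  moreover have "set_similar S (papprox S tr n) T1 T2 \<longleftrightarrow>
     (\<forall>s\<in>T1. \<exists>t\<in>T2. (s,t)\<in>papprox S tr n) \<and> (\<forall>t\<in>T2. \<exists>s\<in>T1. (s,t)\<in>papprox S tr n)"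
    by (rule similar_iff[OF papprox_equiv rel_set_sub[OF P T1] rel_set_sub[OF P T2]])
  ultimately show ?thesis by simp
qed

lemma mass_union_classes:
  assumes f: "finite (supp d)" and nn: "\<forall>x. 0 \<le> d x" and eq: "equiv S R"
    and C: "finite C" "C \<subseteq> S//R"
  shows "mass d (\<Union>C) = (\<Sum>E\<in>C. mass d E)"
proof -
  have "mass d (\<Union>C) = (\<Sum>x\<in>\<Union>C \<inter> supp d. real_of_rat (d x))" by (rule mass_fin[OF f nn])
  also have "\<Union>C \<inter> supp d = \<Union>((\<lambda>E. E \<inter> supp d) ` C)" by auto
  also have "(\<Sum>x\<in>\<Union>((\<lambda>E. E \<inter> supp d) ` C). real_of_rat (d x)) = (\<Sum>E\<in>C. \<Sum>x\<in>E \<inter> supp d. real_of_rat (d x))"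
  proof (rule sum.UNION_disjoint)
    show "finite C" by fact
    show "\<forall>i\<in>C. finite (i \<inter> supp d)" using f by auto
    show "\<forall>i\<in>C. \<forall>j\<in>C. i \<noteq> j \<longrightarrow> i \<inter> supp d \<inter> (j \<inter> supp d) = {}"
      using quotient_disj[OF eq] C(2) by blast
  qed
  also have "\<dots> = (\<Sum>E\<in>C. mass d E)" by (simp add: mass_fin[OF f nn])
  finally show ?thesis .
qed

lemma class_of:
  assumes eq: "equiv S R" and "E \<in> S//R" "x \<in> E"
  shows "E = R``{x}" "R``{x} \<in> S//R"
proof -
  obtain y where y: "y \<in> S" "E = R``{y}" using assms(2) by (auto simp: quotient_def)
  then have "(y,x) \<in> R" using assms(3) by auto
  then show "E = R``{x}" using y eq by (simp add: equiv_class_eq)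
  then show "R``{x} \<in> S//R" using assms(2) by simp
qed

lemma self_class:
  assumes eq: "equiv S R" and "x \<in> S"
  shows "x \<in> R``{x}" "R``{x} \<in> S//R"
  using assms by (auto simp: quotient_def equiv_def refl_on_def)

lemma forth:
  assumes P: "is_pLTS S Sig tr" and F: "\<And>d. relevant_dist tr d \<Longrightarrow> finite (supp d)"
    and eq: "equiv S R" and r1: "relevant_dist tr d1" and r2: "relevant_dist tr d2"
    and DE: "dist_equiv S R d1 d2" and T1: "T1 \<subseteq> supp d1" "T1 \<noteq> {}"
  shows "\<exists>T2. T2 \<subseteq> supp d2 \<and> T2 \<noteq> {} \<and> mass d2 T2 \<ge> mass d1 T1 \<and> set_similar S R T1 T2"
proof -
  have f1: "finite (supp d1)" and f2: "finite (supp d2)" using F r1 r2 by auto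
  have n1: "\<forall>x. 0 \<le> d1 x" and n2: "\<forall>x. 0 \<le> d2 x" and s1: "supp d1 \<subseteq> S" and s2: "supp d2 \<subseteq> S"
    using rel_dist_props[OF P r1] rel_dist_props[OF P r2] by auto
  define C where "C = (\<lambda>x. R``{x}) ` T1"
  define U where "U = \<Union>C"
  define T2 where "T2 = supp d2 \<inter> U"
  have finC: "finite C" unfolding C_def using f1 T1 finite_subset by blast
  have CS: "C \<subseteq> S//R" unfolding C_def using T1 s1 self_class[OF eq] by blast
  have T1U: "T1 \<subseteq> U" unfolding U_def C_def using T1 s1 self_class[OF eq] by blast
  have meq: "\<And>E. E \<in> C \<Longrightarrow> mass d1 E = mass d2 E" using DE CS unfolding dist_equiv_def by blast
  have "mass d2 T2 = mass d2 U"
    unfolding mass_fin[OF f2 n2] T2_def by (rule sum.cong) auto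
  also have "\<dots> = (\<Sum>E\<in>C. mass d2 E)" unfolding U_def by (rule mass_union_classes[OF f2 n2 eq finC CS])
  also have "\<dots> = (\<Sum>E\<in>C. mass d1 E)" using meq by simp
  also have "\<dots> = mass d1 U" unfolding U_def by (rule mass_union_classes[OF f1 n1 eq finC CS, symmetric])
  finally have m: "mass d2 T2 = mass d1 U" .
  have "mass d1 T1 \<le> mass d1 U" by (rule mass_mono[OF f1 n1 T1U])
  with m have ge: "mass d1 T1 \<le> mass d2 T2" by simp
  have hit: "E \<inter> T2 \<noteq> {}" if "E \<in> C" for E
  proof -
    obtain x where x: "x \<in> T1" "E = R``{x}" using \<open>E \<in> C\<close> unfolding C_def by auto
    have "x \<in> E" using x T1 s1 self_class[OF eq] by blast
    then have "0 < mass d1 E" using mass_pos[OF f1 n1] x T1 by blast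
    then have "0 < mass d2 E" using meq that by simp
    then have "E \<inter> supp d2 \<noteq> {}" unfolding mass_fin[OF f2 n2] by (metis less_irrefl sum.empty)
    moreover have "E \<subseteq> U" unfolding U_def using that by auto
    ultimately show ?thesis unfolding T2_def by auto
  qed
  have sim: "set_similar S R T1 T2" unfolding set_similar_def
  proof
    fix E assume E: "E \<in> S//R"
    show "(E \<inter> T1 \<noteq> {}) = (E \<inter> T2 \<noteq> {})"
    proof
      assume "E \<inter> T1 \<noteq> {}"
      then obtain x where "x \<in> E" "x \<in> T1" by auto
      then have "E \<in> C" unfolding C_def using class_of[OF eq E] by auto
      then show "E \<inter> T2 \<noteq> {}" by (rule hit)
    next
      assume "E \<inter> T2 \<noteq> {}"
      then obtain y where y: "y \<in> E" "y \<in> U" unfolding T2_def by auto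
      then obtain x where x: "x \<in> T1" "y \<in> R``{x}" unfolding U_def C_def by auto
      have "R``{x} \<in> S//R" using x T1 s1 self_class[OF eq] by blast
      then have "R``{x} = E" using quotient_disj[OF eq _ E] x y by blast
      moreover have "x \<in> R``{x}" using x T1 s1 self_class[OF eq] by blast
      ultimately show "E \<inter> T1 \<noteq> {}" using x by blast
    qed
  qed
  have "T2 \<noteq> {}" using hit T1 unfolding C_def by blast
  then show ?thesis using sim ge unfolding T2_def by blast
qed

lemma back_ineq:
  assumes P: "is_pLTS S Sig tr" and F: "\<And>d. relevant_dist tr d \<Longrightarrow> finite (supp d)"
    and eq: "equiv S R" and r1: "relevant_dist tr d1" and r2: "relevant_dist tr d2"
    and E: "E \<in> S//R"
    and HB: "\<forall>T1. T1 \<subseteq> supp d1 \<longrightarrow> T1 \<noteq> {} \<longrightarrow> (\<exists>T2. T2 \<subseteq> supp d2 \<and> mass d2 T2 \<ge> mass d1 T1 \<and> set_similar S R T1 T2)"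
  shows "mass d1 E \<le> mass d2 E"
proof -
  have f1: "finite (supp d1)" and f2: "finite (supp d2)" using F r1 r2 by auto
  have n1: "\<forall>x. 0 \<le> d1 x" and n2: "\<forall>x. 0 \<le> d2 x" and s1: "supp d1 \<subseteq> S" and s2: "supp d2 \<subseteq> S"
    using rel_dist_props[OF P r1] rel_dist_props[OF P r2] by auto
  show ?thesis
  proof (cases "E \<inter> supp d1 = {}")
    case True
    then have "mass d1 E = 0" unfolding mass_fin[OF f1 n1] by simp
    then show ?thesis using mass_nonneg[OF f2 n2] by simp
  next
    case False
    define T1 where "T1 = E \<inter> supp d1"
    obtain T2 where T2: "T2 \<subseteq> supp d2" "mass d2 T2 \<ge> mass d1 T1" "set_similar S R T1 T2"
      using HB[rule_format, of "E \<inter> supp d1"] False unfolding T1_def by blast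
    have "T2 \<subseteq> E"
    proof
      fix t assume t: "t \<in> T2"
      then have "t \<in> S" using T2 s2 by auto
      note c = self_class[OF eq this]
      then have "R``{t} \<inter> T1 \<noteq> {}" using T2(3) t unfolding set_similar_def by blast
      then have "R``{t} \<inter> E \<noteq> {}" unfolding T1_def by auto
      then have "R``{t} = E" using quotient_disj[OF eq c(2) E] by blast
      then show "t \<in> E" using c by auto
    qed
    then have "mass d2 T2 \<le> mass d2 E" by (rule mass_mono[OF f2 n2])
    moreover have "mass d1 T1 = mass d1 E" unfolding mass_fin[OF f1 n1] T1_def
      by (rule sum.cong) auto
    ultimately show ?thesis using T2(2) by simp
  qed
qed

lemma relnum_pos:
  assumes P: "is_pLTS S Sig tr" and F: "\<And>d. relevant_dist tr d \<Longrightarrow> finite (supp d)"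
    and "relevant_num tr \<rho>"
  shows "0 < \<rho>"
proof -
  obtain d T where dT: "relevant_dist tr d" "T \<noteq> {}" "T \<subseteq> supp d" "\<rho> = mass d T"
    using assms(3) unfolding relevant_num_def by blast
  then obtain x where "x \<in> T" by auto
  then show ?thesis using mass_pos[OF F[OF dT(1)] rel_dist_props(2)[OF P dT(1)]] dT by auto
qed


lemma mass_empty: "mass d {} = 0" by (simp add: mass_def)

lemma half:
  assumes P: "is_pLTS S Sig tr" and F: "\<And>d. relevant_dist tr d \<Longrightarrow> finite (supp d)"
    and r1: "relevant_dist tr d1" and r2: "relevant_dist tr d2"
    and DE: "dist_equiv S (papprox S tr n) d1 d2"
    and t: "(Dst d1, a, s') \<in> assoc_trans tr"
  shows "\<exists>t' T1 T2. s' = StSet T1 \<and> t' = StSet T2 \<and> (Dst d2, a, t') \<in> assoc_trans tr \<and>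
     relevant_set tr T1 \<and> relevant_set tr T2 \<and> set_similar S (papprox S tr n) T1 T2"
proof -
  obtain \<rho> T1 where x: "a = Num \<rho>" "s' = StSet T1" "relevant_num tr \<rho>" "T1 \<subseteq> supp d1" "\<rho> \<le> mass d1 T1"
    using t unfolding trans_Dst by blast
  have "0 < \<rho>" by (rule relnum_pos[OF P F x(3)])
  then have "T1 \<noteq> {}" using x(5) mass_empty[of d1] by auto
  then obtain T2 where T2: "T2 \<subseteq> supp d2" "T2 \<noteq> {}" "mass d2 T2 \<ge> mass d1 T1" "set_similar S (papprox S tr n) T1 T2"
    using forth[OF P F papprox_equiv r1 r2 DE x(4)] by blast
  have "(Dst d2, a, StSet T2) \<in> assoc_trans tr"
    unfolding trans_Dst using x T2 r2 by auto
  moreover have "relevant_set tr T1" "relevant_set tr T2"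
    using \<open>T1 \<noteq> {}\<close> x(4) r1 T2 r2 unfolding relevant_set_def by auto
  ultimately show ?thesis using x T2 by blast
qed

lemma dist_lemma:
  assumes P: "is_pLTS S Sig tr" and F: "\<And>d. relevant_dist tr d \<Longrightarrow> finite (supp d)"
    and HS: "\<forall>T1 T2. relevant_set tr T1 \<longrightarrow> relevant_set tr T2 \<longrightarrow>
       (set_similar S (papprox S tr n) T1 T2 \<longleftrightarrow> (StSet T1, StSet T2) \<in> lapprox (assoc_states S tr) (assoc_trans tr) k)"
    and r1: "relevant_dist tr d1" and r2: "relevant_dist tr d2"
  shows "dist_equiv S (papprox S tr n) d1 d2 \<longleftrightarrow> (Dst d1, Dst d2) \<in> lapprox (assoc_states S tr) (assoc_trans tr) (Suc k)"
proof
  assume DE: "dist_equiv S (papprox S tr n) d1 d2"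
  have A: "\<forall>a s'. (Dst d1, a, s') \<in> assoc_trans tr \<longrightarrow> (\<exists>t'. (Dst d2, a, t') \<in> assoc_trans tr \<and> (s', t') \<in> lapprox (assoc_states S tr) (assoc_trans tr) k)"
  proof (intro allI impI)
    fix a s' assume "(Dst d1, a, s') \<in> assoc_trans tr"
    from half[OF P F r1 r2 DE this] HS show "\<exists>t'. (Dst d2, a, t') \<in> assoc_trans tr \<and> (s', t') \<in> lapprox (assoc_states S tr) (assoc_trans tr) k"
      by blast
  qed
  have B: "\<forall>a t'. (Dst d2, a, t') \<in> assoc_trans tr \<longrightarrow> (\<exists>s'. (Dst d1, a, s') \<in> assoc_trans tr \<and> (s', t') \<in> lapprox (assoc_states S tr) (assoc_trans tr) k)"
  proof (intro allI impI)
    fix a t' assume "(Dst d2, a, t') \<in> assoc_trans tr"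
    from half[OF P F r2 r1 dist_equiv_sym[OF DE] this] HS set_similar_sym
    show "\<exists>s'. (Dst d1, a, s') \<in> assoc_trans tr \<and> (s', t') \<in> lapprox (assoc_states S tr) (assoc_trans tr) k"
      by blast
  qed
  show "(Dst d1, Dst d2) \<in> lapprox (assoc_states S tr) (assoc_trans tr) (Suc k)"
    using A B r1 r2 by (simp add: Q_Dst)
next
  assume L: "(Dst d1, Dst d2) \<in> lapprox (assoc_states S tr) (assoc_trans tr) (Suc k)"
  have HB1: "\<forall>T1. T1 \<subseteq> supp d1 \<longrightarrow> T1 \<noteq> {} \<longrightarrow> (\<exists>T2. T2 \<subseteq> supp d2 \<and> mass d2 T2 \<ge> mass d1 T1 \<and> set_similar S (papprox S tr n) T1 T2)"
  proof (intro allI impI)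
    fix T1 assume T1: "T1 \<subseteq> supp d1" "T1 \<noteq> {}"
    have rn: "relevant_num tr (mass d1 T1)" unfolding relevant_num_def using r1 T1 by blast
    have "(Dst d1, Num (mass d1 T1), StSet T1) \<in> assoc_trans tr" unfolding trans_Dst using rn T1 r1 by auto
    then obtain t' where t': "(Dst d2, Num (mass d1 T1), t') \<in> assoc_trans tr" "(StSet T1, t') \<in> lapprox (assoc_states S tr) (assoc_trans tr) k"
      using L[simplified] by blast
    then obtain T2 where T2: "t' = StSet T2" "T2 \<subseteq> supp d2" "mass d1 T1 \<le> mass d2 T2" unfolding trans_Dst by blast
    have "t' \<in> assoc_states S tr" using t'(2) lapprox_sub by blast
    then have "relevant_set tr T2" using T2 by (simp add: Q_StSet)
    moreover have "relevant_set tr T1" using T1 r1 unfolding relevant_set_def by auto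
    ultimately show "\<exists>T2. T2 \<subseteq> supp d2 \<and> mass d2 T2 \<ge> mass d1 T1 \<and> set_similar S (papprox S tr n) T1 T2"
      using HS t'(2) T2 by auto
  qed
  have HB2: "\<forall>T1. T1 \<subseteq> supp d2 \<longrightarrow> T1 \<noteq> {} \<longrightarrow> (\<exists>T2. T2 \<subseteq> supp d1 \<and> mass d1 T2 \<ge> mass d2 T1 \<and> set_similar S (papprox S tr n) T1 T2)"
  proof (intro allI impI)
    fix T1 assume T1: "T1 \<subseteq> supp d2" "T1 \<noteq> {}"
    have rn: "relevant_num tr (mass d2 T1)" unfolding relevant_num_def using r2 T1 by blast
    have "(Dst d2, Num (mass d2 T1), StSet T1) \<in> assoc_trans tr" unfolding trans_Dst using rn T1 r2 by auto
    then obtain t' where t': "(Dst d1, Num (mass d2 T1), t') \<in> assoc_trans tr" "(t', StSet T1) \<in> lapprox (assoc_states S tr) (assoc_trans tr) k"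
      using L[simplified] by blast
    then obtain T2 where T2: "t' = StSet T2" "T2 \<subseteq> supp d1" "mass d2 T1 \<le> mass d1 T2" unfolding trans_Dst by blast
    have "t' \<in> assoc_states S tr" using t'(2) lapprox_sub by blast
    then have "relevant_set tr T2" using T2 by (simp add: Q_StSet)
    moreover have "relevant_set tr T1" using T1 r2 unfolding relevant_set_def by auto
    ultimately show "\<exists>T2. T2 \<subseteq> supp d1 \<and> mass d1 T2 \<ge> mass d2 T1 \<and> set_similar S (papprox S tr n) T1 T2"
      using HS t'(2) T2 set_similar_sym by blast
  qed
  show "dist_equiv S (papprox S tr n) d1 d2" unfolding dist_equiv_def
  proof
    fix E assume E: "E \<in> S // papprox S tr n"
    show "mass d1 E = mass d2 E"
      using back_ineq[OF P F papprox_equiv r1 r2 E HB1] back_ineq[OF P F papprox_equiv r2 r1 E HB2]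
      by simp
  qed
qed

lemma st_lemma:
  assumes P: "is_pLTS S Sig tr" and F: "\<And>d. relevant_dist tr d \<Longrightarrow> finite (supp d)"
  shows "\<forall>s t. (s,t) \<in> papprox S tr n \<longleftrightarrow> (St s, St t) \<in> lapprox (assoc_states S tr) (assoc_trans tr) (3*n)"
proof (induction n)
  case 0
  then show ?case by (simp add: Q_St)
next
  case (Suc n)
  have HS: "\<forall>T1 T2. relevant_set tr T1 \<longrightarrow> relevant_set tr T2 \<longrightarrow>
       (set_similar S (papprox S tr n) T1 T2 \<longleftrightarrow> (StSet T1, StSet T2) \<in> lapprox (assoc_states S tr) (assoc_trans tr) (Suc (3*n)))"
    using set_lemma[OF P Suc.IH] by blast
  have HD: "\<And>d1 d2. relevant_dist tr d1 \<Longrightarrow> relevant_dist tr d2 \<Longrightarrow>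
     dist_equiv S (papprox S tr n) d1 d2 \<longleftrightarrow> (Dst d1, Dst d2) \<in> lapprox (assoc_states S tr) (assoc_trans tr) (Suc (Suc (3*n)))"
    using dist_lemma[OF P F HS] by blast
  have rd: "\<And>s a d. (s,a,d) \<in> tr \<Longrightarrow> relevant_dist tr d" unfolding relevant_dist_def by blast
  have e: "3 * Suc n = Suc (Suc (Suc (3*n)))" by simp
  let ?L = "lapprox (assoc_states S tr) (assoc_trans tr) (Suc (Suc (3*n)))"
  have fw: "(\<forall>a q. (St s, a, q) \<in> assoc_trans tr \<longrightarrow> (\<exists>q'. (St t, a, q') \<in> assoc_trans tr \<and> (q, q') \<in> ?L))
     \<longleftrightarrow> (\<forall>a d. (s,a,d) \<in> tr \<longrightarrow> (\<exists>d'. (t,a,d') \<in> tr \<and> dist_equiv S (papprox S tr n) d d'))" for s t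
  proof
    assume A: "\<forall>a q. (St s, a, q) \<in> assoc_trans tr \<longrightarrow> (\<exists>q'. (St t, a, q') \<in> assoc_trans tr \<and> (q, q') \<in> ?L)"
    show "\<forall>a d. (s,a,d) \<in> tr \<longrightarrow> (\<exists>d'. (t,a,d') \<in> tr \<and> dist_equiv S (papprox S tr n) d d')"
    proof (intro allI impI)
      fix a d assume sd: "(s,a,d) \<in> tr"
      then have "(St s, Act a, Dst d) \<in> assoc_trans tr" by (simp add: trans_St)
      then obtain q' where q': "(St t, Act a, q') \<in> assoc_trans tr" "(Dst d, q') \<in> ?L" using A by blast
      then obtain d' where d': "q' = Dst d'" "(t,a,d') \<in> tr" unfolding trans_St by blast
      then show "\<exists>d'. (t,a,d') \<in> tr \<and> dist_equiv S (papprox S tr n) d d'"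
        using HD[OF rd[OF sd] rd[OF d'(2)]] q'(2) by blast
    qed
  next
    assume A: "\<forall>a d. (s,a,d) \<in> tr \<longrightarrow> (\<exists>d'. (t,a,d') \<in> tr \<and> dist_equiv S (papprox S tr n) d d')"
    show "\<forall>a q. (St s, a, q) \<in> assoc_trans tr \<longrightarrow> (\<exists>q'. (St t, a, q') \<in> assoc_trans tr \<and> (q, q') \<in> ?L)"
    proof (intro allI impI)
      fix a q assume "(St s, a, q) \<in> assoc_trans tr"
      then obtain b d where bd: "a = Act b" "q = Dst d" "(s,b,d) \<in> tr" unfolding trans_St by blast
      then obtain d' where d': "(t,b,d') \<in> tr" "dist_equiv S (papprox S tr n) d d'" using A by blast
      have "(St t, a, Dst d') \<in> assoc_trans tr" using bd d' by (simp add: trans_St)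
      moreover have "(q, Dst d') \<in> ?L" using HD[OF rd[OF bd(3)] rd[OF d'(1)]] d' bd by simp
      ultimately show "\<exists>q'. (St t, a, q') \<in> assoc_trans tr \<and> (q, q') \<in> ?L" by blast
    qed
  qed
  have bw: "(\<forall>a q'. (St t, a, q') \<in> assoc_trans tr \<longrightarrow> (\<exists>q. (St s, a, q) \<in> assoc_trans tr \<and> (q, q') \<in> ?L))
     \<longleftrightarrow> (\<forall>a d'. (t,a,d') \<in> tr \<longrightarrow> (\<exists>d. (s,a,d) \<in> tr \<and> dist_equiv S (papprox S tr n) d d'))" for s t
  proof
    assume A: "\<forall>a q'. (St t, a, q') \<in> assoc_trans tr \<longrightarrow> (\<exists>q. (St s, a, q) \<in> assoc_trans tr \<and> (q, q') \<in> ?L)"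
    show "\<forall>a d'. (t,a,d') \<in> tr \<longrightarrow> (\<exists>d. (s,a,d) \<in> tr \<and> dist_equiv S (papprox S tr n) d d')"
    proof (intro allI impI)
      fix a d' assume sd: "(t,a,d') \<in> tr"
      then have "(St t, Act a, Dst d') \<in> assoc_trans tr" by (simp add: trans_St)
      then obtain q where q: "(St s, Act a, q) \<in> assoc_trans tr" "(q, Dst d') \<in> ?L" using A by blast
      then obtain d where d: "q = Dst d" "(s,a,d) \<in> tr" unfolding trans_St by blast
      then show "\<exists>d. (s,a,d) \<in> tr \<and> dist_equiv S (papprox S tr n) d d'"
        using HD[OF rd[OF d(2)] rd[OF sd]] q(2) by blast
    qed
  next
    assume A: "\<forall>a d'. (t,a,d') \<in> tr \<longrightarrow> (\<exists>d. (s,a,d) \<in> tr \<and> dist_equiv S (papprox S tr n) d d')"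
    show "\<forall>a q'. (St t, a, q') \<in> assoc_trans tr \<longrightarrow> (\<exists>q. (St s, a, q) \<in> assoc_trans tr \<and> (q, q') \<in> ?L)"
    proof (intro allI impI)
      fix a q' assume "(St t, a, q') \<in> assoc_trans tr"
      then obtain b d' where bd: "a = Act b" "q' = Dst d'" "(t,b,d') \<in> tr" unfolding trans_St by blast
      then obtain d where d: "(s,b,d) \<in> tr" "dist_equiv S (papprox S tr n) d d'" using A by blast
      have "(St s, a, Dst d) \<in> assoc_trans tr" using bd d by (simp add: trans_St)
      moreover have "(Dst d, q') \<in> ?L" using HD[OF rd[OF d(1)] rd[OF bd(3)]] d bd by simp
      ultimately show "\<exists>q. (St s, a, q) \<in> assoc_trans tr \<and> (q, q') \<in> ?L" by blast
    qed
  qed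
  have "(s,t) \<in> papprox S tr (Suc n) \<longleftrightarrow> (St s, St t) \<in> lapprox (assoc_states S tr) (assoc_trans tr) (Suc (Suc (Suc (3*n))))" for s t
  proof -
    have "(St s, St t) \<in> lapprox (assoc_states S tr) (assoc_trans tr) (Suc (Suc (Suc (3*n)))) \<longleftrightarrow>
      (s \<in> S \<and> t \<in> S) \<and>
      (\<forall>a q. (St s, a, q) \<in> assoc_trans tr \<longrightarrow> (\<exists>q'. (St t, a, q') \<in> assoc_trans tr \<and> (q, q') \<in> ?L)) \<and>
      (\<forall>a q'. (St t, a, q') \<in> assoc_trans tr \<longrightarrow> (\<exists>q. (St s, a, q) \<in> assoc_trans tr \<and> (q, q') \<in> ?L))"
      by (simp only: lapprox.simps mem_Collect_eq prod.case mem_Sigma_iff Q_St)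
    also have "\<dots> \<longleftrightarrow> (s,t) \<in> papprox S tr (Suc n)"
      unfolding fw bw by simp
    finally show ?thesis by simp
  qed
  then show ?case unfolding e by blast
qed

theorem mainTheorem2:
  fixes S :: "'s set" and Sig :: "'a set" and tr :: "('s,'a) ptrans"
  assumes "is_pLTS S Sig tr"
    and "\<And>d. relevant_dist tr d \<Longrightarrow> finite (supp d)"
  shows "(\<forall>d1 d2. relevant_dist tr d1 \<longrightarrow> relevant_dist tr d2 \<longrightarrow>
            (dist_equiv S (papprox S tr n) d1 d2 \<longleftrightarrow>
             (Dst d1, Dst d2) \<in> lapprox (assoc_states S tr) (assoc_trans tr) (3*n+2)))
       \<and> (\<forall>T1 T2. relevant_set tr T1 \<longrightarrow> relevant_set tr T2 \<longrightarrow>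
            (set_similar S (papprox S tr n) T1 T2 \<longleftrightarrow>
             (StSet T1, StSet T2) \<in> lapprox (assoc_states S tr) (assoc_trans tr) (3*n+1)))"
proof -
  have HS: "\<forall>T1 T2. relevant_set tr T1 \<longrightarrow> relevant_set tr T2 \<longrightarrow>
       (set_similar S (papprox S tr n) T1 T2 \<longleftrightarrow> (StSet T1, StSet T2) \<in> lapprox (assoc_states S tr) (assoc_trans tr) (Suc (3*n)))"
    using set_lemma[OF assms(1) st_lemma[OF assms]] by blast
  have HD: "\<forall>d1 d2. relevant_dist tr d1 \<longrightarrow> relevant_dist tr d2 \<longrightarrow>
     (dist_equiv S (papprox S tr n) d1 d2 \<longleftrightarrow> (Dst d1, Dst d2) \<in> lapprox (assoc_states S tr) (assoc_trans tr) (Suc (Suc (3*n))))"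
    using dist_lemma[OF assms HS] by blast
  have e1: "3*n+2 = Suc (Suc (3*n))" and e2: "3*n+1 = Suc (3*n)" by simp_all
  show ?thesis unfolding e1 e2 using HS HD by blast
qed

end
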